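(* Let $d=1$. There exists a probability density $f_\natural\in\mathcal F_{\mathrm{Ent}}$ such that $\int_{\mathbb{R}}x^2f_\natural(x)\,\mathrm{d}x<\infty$ and $f_\natural\notin\mathcal F_{\mathrm{CSSA}}$.
   Context: $\log_+t=\max\{\log t,0\}$ for $t>0$, $\log_+0=0$. $\mathcal F_{\mathrm{Ent}}$ is the class of all continuous, strictly positive probability densities $f$ on $\mathbb{R}^d$ with $\int f\log_+f\,\mathrm{d}x<\infty$. Densities are w.r.t. Lebesgue measure; $F(A)=\int_Af\,\mathrm{d}x$; $\operatorname{supp}(f)=\{x:f(x)>0\}$. Comparison cubes are closed axis-aligned cubes (closed intervals when $d=1$); partition cubes may be half-open so as to be disjoint. "A cube of side $r$ with a vertex at $y$" means a closed axis-aligned cube of side length $r$ having $y$ as one of its vertices. A family of cubes of common side length is adjacent if they have pairwise disjoint interiors and the union of their closures is connected. Definition ($\mathcal F_{\mathrm{FSSA}}$): a density $f$ on $\mathbb{R}^d$ belongs to $\mathcal F_{\mathrm{FSSA}}$ if there exist, for each $m\ge1$, a partition $\operatorname{supp}(f)=A^{(m)}_0\sqcup A^{(m)}_1\sqcup\cdots\sqcup A^{(m)}_m$ in which $A^{(m)}_1,\dots,A^{(m)}_m$ are adjacent cubes of common side length $h_m>0$ and $A^{(m)}_0$ is the remainder, such that: (i) $f$ is continuous on $\operatorname{supp}(f)$ except on a set of $F$-measure zero; (ii) there exist $r>0$ and, for every $y\in\operatorname{supp}(f)$, a comparison cube $C(r,y)$ of side length $r$ containing $y$, such that $D_r(y)=\log\big(f(y)/\inf_{z\in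 C(r,y)}f(z)\big)$ is measurable on $\operatorname{supp}(f)$ and $\int_{\operatorname{supp}(f)}D_r\,\mathrm{d}F<\infty$; (iii) there exists $M\in\mathbb N$ such that for every $m\ge M$: (a) if $y\in A^{(m)}_0$ then $C(r,y)\cap A^{(m)}_0$ contains a cube of side $r/2$ with a vertex at $y$; (b) if $y\in\operatorname{supp}(f)\setminus A^{(m)}_0$ then $C(r,y)\cap(\operatorname{supp}(f)\setminus A^{(m)}_0)$ contains a cube of side $r/2$ with a vertex at $y$. Definition ($\mathcal F_{\mathrm{CSSA}}$): a density $f$ belongs to $\mathcal F_{\mathrm{CSSA}}$ if there exist a measurable partition $\operatorname{supp}(f)=\bigsqcup_{\ell\ge1}Y_\ell$ with $p_\ell=F(Y_\ell)$, and, for each $\ell$ with $p_\ell>0$, a scale $r_\ell>0$, comparison cubes $C_\ell(y)$ of side $r_\ell$ containing $y$ ($y\in Y_\ell$), and for every $m\ge1$ a partition $Y_\ell=A^{(m)}_{\ell,0}\sqcup\cdots\sqcup A^{(m)}_{\ell,m}$ with $A^{(m)}_{\ell,1},\dots,A^{(m)}_{\ell,m}$ adjacent cubes of common side $h_{\ell,m}>0$, such that for each $\ell$ with $p_\ell>0$ the normalized restriction $f_\ell=f\mathbf 1_{Y_\ell}/p_\ell$ satisfies the definition of $\mathcal F_{\mathrm{FSSA}}$ with these witnesses (scale $r_\ell$, cubes $C_\ell(y)$, these partitions), and, with $F_\ell$ the law of density $f_\ell$ and $D_\ell(y)=\log\big(f_\ell(y)/\inf_{z\in C_\ell(y)}f_\ell(z)\big)$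 for $y\in Y_\ell$, one has $\sum_{\ell:p_\ell>0}p_\ell\int_{Y_\ell}D_\ell\,\mathrm{d}F_\ell<\infty$ and $\sum_{\ell:p_\ell>0}p_\ell\log_+(1/r_\ell)<\infty$. *)

theory Defs
  imports "HOL-Analysis.Analysis"
begin

text \<open>Everything is specialised to dimension d = 1: densities are functions real \<Rightarrow> real,
cubes are intervals.\<close>

definition log_plus :: "real \<Rightarrow> real" where
  "log_plus t = (if t > 0 then max (ln t) 0 else 0)"

definition supp :: "(real \<Rightarrow> real) \<Rightarrow> real set" where
  "supp f = {x. f x > 0}"

definition is_density :: "(real \<Rightarrow> real) \<Rightarrow> bool" where
  "is_density f \<longleftrightarrow> (\<forall>x. 0 \<le> f x) \<and> f \<in> borel_measurable lebesgue
     \<and> (\<integral>\<^sup>+ x. ennreal (f x) \<partial>lebesgue) = 1"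

definition law :: "(real \<Rightarrow> real) \<Rightarrow> real measure" where
  "law f = density lebesgue (\<lambda>x. ennreal (f x))"

definition F_Ent :: "(real \<Rightarrow> real) set" where
  "F_Ent = {f. continuous_on UNIV f \<and> (\<forall>x. 0 < f x) \<and> is_density f
     \<and> (\<integral>\<^sup>+ x. ennreal (f x * log_plus (f x)) \<partial>lborel) < \<infinity>}"

definition closed_cube :: "real \<Rightarrow> real set \<Rightarrow> bool" where
  "closed_cube r S \<longleftrightarrow> (\<exists>a. S = {a..a+r})"

definition part_cube :: "real \<Rightarrow> real set \<Rightarrow> bool" where
  "part_cube h S \<longleftrightarrow> (\<exists>a. {a<..<a+h} \<subseteq> S \<and> S \<subseteq> {a..a+h})"

definition vertex_cube :: "real \<Rightarrow> real \<Rightarrow> real set \<Rightarrow> bool" where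
  "vertex_cube s y S \<longleftrightarrow> S = {y..y+s} \<or> S = {y-s..y}"

definition adjacent :: "real \<Rightarrow> nat \<Rightarrow> (nat \<Rightarrow> real set) \<Rightarrow> bool" where
  "adjacent h m B \<longleftrightarrow> (\<forall>i\<in>{1..m}. part_cube h (B i))
     \<and> (\<forall>i\<in>{1..m}. \<forall>j\<in>{1..m}. i \<noteq> j \<longrightarrow> interior (B i) \<inter> interior (B j) = {})
     \<and> connected (\<Union>i\<in>{1..m}. closure (B i))"

definition Dfun :: "(real \<Rightarrow> real) \<Rightarrow> (real \<Rightarrow> real set) \<Rightarrow> real \<Rightarrow> ennreal" where
  "Dfun f C y = (let i = Inf (f ` C y) in if 0 < i then ennreal (ln (f y / i)) else \<infinity>)"

text \<open>f satisfies the definition of F_FSSA with witnesses: scale r, comparison cubes C,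
  partitions A m 0, ..., A m m (m \<ge> 1) with common side h m.\<close>
definition fssa_with :: "(real \<Rightarrow> real) \<Rightarrow> real \<Rightarrow> (real \<Rightarrow> real set)
    \<Rightarrow> (nat \<Rightarrow> nat \<Rightarrow> real set) \<Rightarrow> (nat \<Rightarrow> real) \<Rightarrow> bool" where
  "fssa_with f r C A h \<longleftrightarrow>
     is_density f \<and>
     (\<forall>m\<ge>1. 0 < h m \<and> supp f = (\<Union>i\<le>m. A m i) \<and> disjoint_family_on (A m) {..m}
        \<and> adjacent (h m) m (A m)) \<and>
     \<comment> \<open>(i)\<close>
     (\<exists>N \<in> sets lebesgue. emeasure (law f) N = 0 \<and>
        (\<forall>x \<in> supp f - N. continuous (at x within supp f) f)) \<and>
     \<comment> \<open>(ii)\<close>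
     0 < r \<and>
     (\<forall>y\<in>supp f. closed_cube r (C y) \<and> y \<in> C y) \<and>
     (\<lambda>y. if y \<in> supp f then Dfun f C y else 0) \<in> borel_measurable lebesgue \<and>
     (\<integral>\<^sup>+ y. indicator (supp f) y * Dfun f C y \<partial>law f) < \<infinity> \<and>
     \<comment> \<open>(iii)\<close>
     (\<exists>M::nat. \<forall>m. M \<le> m \<and> 1 \<le> m \<longrightarrow>
        (\<forall>y\<in>A m 0. \<exists>S. vertex_cube (r/2) y S \<and> S \<subseteq> C y \<inter> A m 0) \<and>
        (\<forall>y\<in>supp f - A m 0. \<exists>S. vertex_cube (r/2) y S \<and> S \<subseteq> C y \<inter> (supp f - A m 0)))"

definition F_FSSA :: "(real \<Rightarrow> real) set" where
  "F_FSSA = {f. \<exists>r C A h. fssa_with f r C A h}"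

definition F_CSSA :: "(real \<Rightarrow> real) set" where
  "F_CSSA = {f. is_density f \<and>
     (\<exists>(Y :: nat \<Rightarrow> real set) (r :: nat \<Rightarrow> real) (C :: nat \<Rightarrow> real \<Rightarrow> real set)
        (A :: nat \<Rightarrow> nat \<Rightarrow> nat \<Rightarrow> real set) (h :: nat \<Rightarrow> nat \<Rightarrow> real).
       let p = (\<lambda>l. measure (law f) (Y l));
           fl = (\<lambda>l x. indicator (Y l) x * f x / p l)
       in (\<forall>l. Y l \<in> sets lebesgue) \<and> disjoint_family Y \<and> (\<Union>l. Y l) = supp f \<and>
          (\<forall>l. 0 < p l \<longrightarrow> fssa_with (fl l) (r l) (C l) (A l) (h l)) \<and>
          (\<Sum>l. if 0 < p l then ennreal (p l) *
                (\<integral>\<^sup>+ y. indicator (Y l) y * Dfun (fl l) (C l) y \<partial>law (fl l)) else 0) < \<infinity> \<and>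
          (\<Sum>l. if 0 < p l then ennreal (p l * log_plus (1 / r l)) else 0) < \<infinity>)}"

end

theory Submission
  imports Defs "HOL-Probability.Distributions"
begin

definition NN :: "nat \<Rightarrow> nat" where
  "NN k = nat \<lceil>exp (3 * exp ((real k + 1) ^ 2))\<rceil>"

definition GG :: "real set" where
  "GG = {real k + real i / real (NN k) | k i. 1 \<le> k \<and> i \<le> NN k}"

definition EE :: "real \<Rightarrow> real" where
  "EE x = 3 * exp ((x + 1) ^ 2) + \<bar>x\<bar> + 1"

definition MM :: "real \<Rightarrow> real" where
  "MM x = 4 * exp (3 * exp ((x + 1) ^ 2)) + 8"

definition ww :: "real \<Rightarrow> real" where
  "ww x = std_normal_density x"

definition hh :: "real \<Rightarrow> real" where
  "hh x = ww x * (exp (- EE x) + min 1 (MM x * infdist x GG))"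

definition Gd :: "real set" where
  "Gd = {y. 1 \<le> y \<and> 1 \<le> MM y * infdist y GG}"

lemma ww_pos: "0 < ww x"
  unfolding ww_def by (simp add: normal_density_pos)

lemma ww_eq: "ww x = exp (- (x\<^sup>2) / 2) / sqrt (2 * pi)"
  unfolding ww_def std_normal_density_def by simp

lemma NN_ge: "exp (3 * exp ((real k + 1) ^ 2)) \<le> real (NN k)"
proof -
  define e where "e = exp (3 * exp ((real k + 1)^2))"
  have "0 < e" unfolding e_def by simp
  then have "0 \<le> \<lceil>e\<rceil>" by simp
  then have "real (nat \<lceil>e\<rceil>) = of_int \<lceil>e\<rceil>" by simp
  then show ?thesis unfolding NN_def e_def[symmetric] by (simp add: le_of_int_ceiling)
qed

lemma NN_le: "real (NN k) \<le> exp (3 * exp ((real k + 1) ^ 2)) + 1"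
proof -
  define e where "e = exp (3 * exp ((real k + 1)^2))"
  have "0 < e" unfolding e_def by simp
  then have "0 \<le> \<lceil>e\<rceil>" by simp
  then have "real (nat \<lceil>e\<rceil>) = of_int \<lceil>e\<rceil>" by simp
  then show ?thesis unfolding NN_def e_def[symmetric] using of_int_ceiling_le_add_one[of e] by simp
qed

lemma NN_pos: "1 \<le> NN k"
proof -
  have "1 \<le> exp (3 * exp ((real k + 1) ^ 2))" by simp
  with NN_ge[of k] show ?thesis by linarith
qed

lemma cont_hh: "continuous_on UNIV hh"
  unfolding hh_def ww_eq EE_def MM_def
  by (intro continuous_intros) auto

lemma hh_pos: "0 < hh x"
  unfolding hh_def using ww_pos[of x] infdist_nonneg[of x GG]
  by (intro mult_pos_pos) (auto intro!: add_pos_nonneg simp: MM_def)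

lemma hh_le: "hh x \<le> 2 * ww x"
proof -
  have "0 \<le> EE x" unfolding EE_def by (simp add: add_nonneg_nonneg)
  then have "exp (- EE x) \<le> 1" by simp
  then have "exp (- EE x) + min 1 (MM x * infdist x GG) \<le> 2" by linarith
  then have "ww x * (exp (- EE x) + min 1 (MM x * infdist x GG)) \<le> ww x * 2"
    using ww_pos[of x] by (intro mult_left_mono) auto
  then show ?thesis unfolding hh_def by simp
qed

lemma hh_borel[measurable]: "hh \<in> borel_measurable borel"
  by (rule borel_measurable_continuous_onI[OF cont_hh])

lemma ww_borel[measurable]: "ww \<in> borel_measurable borel"
  unfolding ww_def by simp

lemma int_ww: "integrable lborel ww"
  using integrable_std_normal_moment[of 0] unfolding ww_def by simp

lemma int_hh: "integrable lborel hh"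
proof (rule Bochner_Integration.integrable_bound[OF integrable_mult_right[OF int_ww, of 2]])
  show "hh \<in> borel_measurable lborel" by simp
  show "AE x in lborel. norm (hh x) \<le> norm (2 * ww x)"
    using hh_le hh_pos ww_pos by (auto simp: less_imp_le)
qed

definition ZZ :: real where "ZZ = integral\<^sup>L lborel hh"

lemma ZZ_pos: "0 < ZZ"
proof -
  have ge: "0 \<le> ZZ" unfolding ZZ_def using hh_pos by (simp add: less_imp_le)
  have "ZZ \<noteq> 0"
  proof
    assume "ZZ = 0"
    then have "AE x in lborel. hh x = 0"
      using integral_nonneg_eq_0_iff_AE[OF int_hh] hh_pos unfolding ZZ_def by (auto simp: less_imp_le)
    moreover have hne: "\<And>x. hh x \<noteq> 0" using hh_pos by (metis less_irrefl)
    ultimately have "AE (x::real) in lborel. False" by simp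
    then have "ae_filter (lborel::real measure) = bot" using trivial_limit_def by blast
    then show False by (simp add: ae_filter_eq_bot_iff)
  qed
  with ge show ?thesis by simp
qed

definition ff :: "real \<Rightarrow> real" where "ff x = hh x / ZZ"

lemma ff_pos: "0 < ff x"
  unfolding ff_def using hh_pos ZZ_pos by simp

lemma ff_borel[measurable]: "ff \<in> borel_measurable borel"
  unfolding ff_def[abs_def] by simp

lemma cont_ff: "continuous_on UNIV ff"
  unfolding ff_def[abs_def] using ZZ_pos by (intro continuous_intros cont_hh) auto

lemma int_ff: "integrable lborel ff"
  unfolding ff_def[abs_def] by (intro integrable_divide int_hh)

lemma nn_ff: "(\<integral>\<^sup>+ x. ennreal (ff x) \<partial>lborel) = 1"
proof -
  have "(\<integral>\<^sup>+ x. ennreal (ff x) \<partial>lborel) = ennreal (integral\<^sup>L lborel ff)"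
    by (rule nn_integral_eq_integral[OF int_ff]) (simp add: ff_pos less_imp_le)
  also have "integral\<^sup>L lborel ff = 1"
    unfolding ff_def[abs_def] using ZZ_pos by (simp add: ZZ_def[symmetric])
  finally show ?thesis by simp
qed

lemma ww_le: "ww x \<le> 1/2"
proof -
  have e: "exp (- (x\<^sup>2) / 2) \<le> 1" by simp
  have e2: "exp (- (x\<^sup>2 / 2)) \<le> 1" by simp
  have "2 \<le> sqrt (2 * pi)"
  proof -
    have "sqrt 4 \<le> sqrt (2 * pi)" using pi_gt3 by (intro real_sqrt_le_mono) simp
    then show ?thesis by simp
  qed
  then have "exp (- (x\<^sup>2) / 2) / sqrt (2 * pi) \<le> 1 / 2" using e
    by (simp add: divide_simps) (use e2 in linarith)
  then show ?thesis unfolding ww_eq .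
qed

lemma ff_le: "ff x \<le> 1 / ZZ"
  unfolding ff_def using hh_le[of x] ww_le[of x] ZZ_pos by (simp add: divide_right_mono)

lemma log_plus_le: "0 \<le> t \<Longrightarrow> log_plus t \<le> t"
  unfolding log_plus_def using ln_le_minus_one[of t] by auto

lemma log_plus_nonneg: "0 \<le> log_plus t"
  unfolding log_plus_def by auto

lemma ff_in_Ent: "ff \<in> F_Ent"
proof -
  have dens: "is_density ff"
    unfolding is_density_def
  proof (intro conjI allI)
    show "0 \<le> ff x" for x using ff_pos[of x] by simp
    show "ff \<in> borel_measurable lebesgue" by (rule measurable_completion) simp
    show "(\<integral>\<^sup>+ x. ennreal (ff x) \<partial>lebesgue) = 1"
      by (simp add: nn_integral_completion nn_ff)
  qed
  have "(\<integral>\<^sup>+ x. ennreal (ff x * log_plus (ff x)) \<partial>lborel) \<le> (\<integral>\<^sup>+ x. ennreal (1 / ZZ) * ennreal (ff x) \<partial>lborel)"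
  proof (rule nn_integral_mono)
    fix x
    have "ff x * log_plus (ff x) \<le> ff x * ff x"
      using ff_pos[of x] log_plus_le[of "ff x"] by (intro mult_left_mono) auto
    also have "\<dots> \<le> (1 / ZZ) * ff x" using ff_le[of x] ff_pos[of x] by (intro mult_right_mono) auto
    finally show "ennreal (ff x * log_plus (ff x)) \<le> ennreal (1 / ZZ) * ennreal (ff x)"
      using ZZ_pos ff_pos[of x] by (simp add: ennreal_leI flip: ennreal_mult)
  qed
  also have "\<dots> = ennreal (1 / ZZ)" by (simp add: nn_integral_cmult nn_ff)
  finally have "(\<integral>\<^sup>+ x. ennreal (ff x * log_plus (ff x)) \<partial>lborel) < \<infinity>"
    by (simp add: le_less_trans)
  then show ?thesis unfolding F_Ent_def using cont_ff ff_pos dens by auto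
qed

lemma ff_moment: "(\<integral>\<^sup>+ x. ennreal (x\<^sup>2 * ff x) \<partial>lborel) < \<infinity>"
proof -
  have int2: "integrable lborel (\<lambda>x. 2 / ZZ * (ww x * x ^ 2))"
    using integrable_std_normal_moment[of 2] unfolding ww_def by (intro integrable_mult_right) 
  have "(\<integral>\<^sup>+ x. ennreal (x\<^sup>2 * ff x) \<partial>lborel) \<le> (\<integral>\<^sup>+ x. ennreal (2 / ZZ * (ww x * x ^ 2)) \<partial>lborel)"
  proof (rule nn_integral_mono)
    fix x
    have "x\<^sup>2 * ff x \<le> x\<^sup>2 * (2 * ww x / ZZ)"
      unfolding ff_def using hh_le[of x] ZZ_pos by (intro mult_left_mono divide_right_mono) auto
    then show "ennreal (x\<^sup>2 * ff x) \<le> ennreal (2 / ZZ * (ww x * x ^ 2))"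
      by (intro ennreal_leI) (simp add: power2_eq_square field_simps)
  qed
  also have "\<dots> = ennreal (integral\<^sup>L lborel (\<lambda>x. 2 / ZZ * (ww x * x ^ 2)))"
    by (rule nn_integral_eq_integral[OF int2]) (auto intro!: AE_I2 simp: ww_pos less_imp_le ZZ_pos)
  finally show ?thesis by (simp add: le_less_trans)
qed

lemma inv_ww_le: "1 / ww y \<le> 3 * exp (y\<^sup>2)"
proof -
  have s: "sqrt (2 * pi) \<le> 3"
  proof -
    have "sqrt (2 * pi) \<le> sqrt 9" using pi_less_4 by (intro real_sqrt_le_mono) simp
    then show ?thesis by simp
  qed
  have "exp (y\<^sup>2 / 2) \<le> exp (y\<^sup>2)" by simp
  moreover have "1 / ww y = sqrt (2 * pi) * exp (y\<^sup>2 / 2)"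
    unfolding ww_eq by (simp add: exp_minus field_simps)
  ultimately show ?thesis using s by (simp add: mult_mono)
qed

lemma in_GG: "1 \<le> k \<Longrightarrow> i \<le> NN k \<Longrightarrow> real k + real i / real (NN k) \<in> GG"
  unfolding GG_def by blast

lemma grid:
  assumes "1 \<le> k" "real k \<le> y" "y \<le> real k + 1" "a \<le> y" "y \<le> a + r" "1 / real (NN k) \<le> r"
  shows "\<exists>g\<in>GG. a \<le> g \<and> g \<le> a + r \<and> real k \<le> g"
proof -
  define N where "N = NN k"
  have N1: "1 \<le> N" unfolding N_def by (rule NN_pos)
  then have Npos: "0 < real N" by simp
  show ?thesis
  proof (cases "a \<le> real k")
    case True
    have "real k + real 0 / real N \<in> GG" unfolding N_def by (rule in_GG[OF assms(1)]) simp
    then show ?thesis using True assms by (intro bexI[of _ "real k"]) auto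
  next
    case False
    show ?thesis
    proof (cases "real k + 1 \<le> a + r")
      case True
      have "real k + real N / real N \<in> GG" unfolding N_def by (rule in_GG[OF assms(1)]) simp
      then have "real k + 1 \<in> GG" using Npos by simp
      then show ?thesis using True assms by (intro bexI[of _ "real k + 1"]) auto
    next
      case False2: False
      define c where "c = \<lceil>(a - real k) * real N\<rceil>"
      have "0 < (a - real k) * real N" using False Npos by (intro mult_pos_pos) auto
      then have c0: "0 \<le> c" unfolding c_def by simp
      define i where "i = nat c"
      have ri: "real i = of_int c" unfolding i_def using c0 by simp
      have lo: "(a - real k) * real N \<le> real i" unfolding ri c_def by (rule le_of_int_ceiling)
      have hi: "real i < (a - real k) * real N + 1" unfolding ri c_def using ceiling_correct[of "(a - real k) * real N"] by linarith
      define g where "g = real k + real i / real N"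
      have ga: "a \<le> g" unfolding g_def using lo Npos by (simp add: field_simps)
      have "real i / real N < ((a - real k) * real N + 1) / real N"
        using hi Npos by (rule divide_strict_right_mono)
      also have "\<dots> = a - real k + 1 / real N" using Npos by (simp add: field_simps)
      finally have gb: "g < a + 1 / real N" unfolding g_def by simp
      have gr: "g \<le> a + r" using gb assms(6) unfolding N_def by simp
      have "real i / real N < 1" using gr False2 unfolding g_def by simp
      then have "real i < real N" using Npos by (simp add: divide_less_eq)
      then have "i \<le> N" by simp
      then have "g \<in> GG" unfolding g_def N_def by (intro in_GG assms(1))
      moreover have "real k \<le> g" unfolding g_def by simp
      ultimately show ?thesis using ga gr by blast
    qed
  qed
qed

lemma hh_GG: "g \<in> GG \<Longrightarrow> hh g = ww g * exp (- EE g)"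
  unfolding hh_def by simp

lemma hh_Gd: "y \<in> Gd \<Longrightarrow> ww y \<le> hh y"
proof -
  assume "y \<in> Gd"
  then have "min 1 (MM y * infdist y GG) = 1" unfolding Gd_def by auto
  then have "hh y = ww y * (exp (- EE y) + 1)" unfolding hh_def by simp
  also have "\<dots> \<ge> ww y * 1" using ww_pos[of y] by (intro mult_left_mono) auto
  finally show ?thesis by simp
qed

lemma ratio:
  assumes g: "g \<in> GG" and y: "y \<in> Gd" and gy: "y - 1 \<le> g"
  shows "1 / ww y \<le> ln (hh y / hh g)"
proof -
  have y1: "1 \<le> y" using y unfolding Gd_def by auto
  have g0: "0 \<le> g" using gy y1 by simp
  define T where "T = (g\<^sup>2 - y\<^sup>2) / 2 + EE g"
  have wq: "ww y / ww g = exp ((g\<^sup>2 - y\<^sup>2) / 2)"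
    unfolding ww_eq by (simp add: exp_diff[symmetric] diff_divide_distrib)
  have "exp T = exp ((g\<^sup>2 - y\<^sup>2) / 2) * exp (EE g)" unfolding T_def by (simp add: exp_add)
  also have "\<dots> = ww y / ww g * exp (EE g)" using wq by simp
  also have "\<dots> = ww y / (ww g * exp (- EE g))" using ww_pos[of g] by (simp add: exp_minus field_simps)
  also have "\<dots> \<le> hh y / hh g"
    unfolding hh_GG[OF g] using hh_Gd[OF y] ww_pos[of g]
    by (intro divide_right_mono) auto
  finally have "ln (exp T) \<le> ln (hh y / hh g)" by (intro ln_mono) auto
  then have lT: "T \<le> ln (hh y / hh g)" by simp
  have yy: "y * y \<le> (g + 1) * (g + 1)" using gy y1 by (intro mult_mono) auto
  then have "y\<^sup>2 \<le> (g + 1)\<^sup>2" by (simp add: power2_eq_square)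
  then have ex: "exp (y\<^sup>2) \<le> exp ((g + 1)\<^sup>2)" by simp
  have nn: "0 \<le> (g\<^sup>2 - y\<^sup>2) / 2 + \<bar>g\<bar> + 1"
  proof -
    have q: "0 \<le> g * g - y * y + 2 * g + 2" using yy g0 by (simp add: algebra_simps)
    have q2: "0 \<le> (g * g - y * y) / 2 + g + 1" using q by (simp add: field_simps)
    then show ?thesis using g0 by (simp add: power2_eq_square)
  qed
  define A where "A = (g\<^sup>2 - y\<^sup>2) / 2 + \<bar>g\<bar> + 1"
  define B where "B = exp ((g + 1)\<^sup>2)"
  have TAB: "T = A + 3 * B" unfolding T_def EE_def A_def B_def by simp
  have "3 * exp (y\<^sup>2) \<le> T" unfolding TAB using nn ex unfolding A_def[symmetric] B_def[symmetric] by linarith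
  then show ?thesis using inv_ww_le[of y] lT by simp
qed

lemma key:
  fixes Fl :: "real \<Rightarrow> real" and C :: "real \<Rightarrow> real set"
  assumes y: "y \<in> Gd" and r: "0 < r" and Cy: "C y = {a..a+r}" and ya: "a \<le> y" "y \<le> a + r"
    and p: "0 < p" and Fly: "Fl y = ff y / p" and Fnn: "\<And>z. 0 \<le> Fl z"
    and Fle: "\<And>z. Fl z \<le> ff z / p"
  shows "ennreal (1 / ww y) \<le> Dfun Fl C y + ennreal (log_plus (1 / r))"
proof -
  define k where "k = nat \<lfloor>y\<rfloor>"
  have y1: "1 \<le> y" using y unfolding Gd_def by auto
  have rk: "real k = of_int \<lfloor>y\<rfloor>" unfolding k_def using y1 by simp
  have ky: "real k \<le> y" "y < real k + 1" unfolding rk by linarith+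
  have k1: "1 \<le> k" using y1 unfolding k_def by linarith
  show ?thesis
  proof (cases "1 / real (NN k) \<le> r")
    case True
    obtain g where g: "g \<in> GG" "a \<le> g" "g \<le> a + r" "real k \<le> g"
      using grid[OF k1 ky(1) _ ya True] ky by fastforce
    have gC: "g \<in> C y" using g Cy by simp
    define i where "i = Inf (Fl ` C y)"
    have D: "Dfun Fl C y = (if 0 < i then ennreal (ln (Fl y / i)) else \<infinity>)"
      unfolding Dfun_def i_def Let_def by simp
    show ?thesis
    proof (cases "0 < i")
      case False
      then show ?thesis using D by simp
    next
      case True
      have "i \<le> Fl g" unfolding i_def
        by (rule cInf_lower) (use gC Fnn in \<open>auto intro!: bdd_belowI[where m=0]\<close>)
      also have "\<dots> \<le> ff g / p" by (rule Fle)
      finally have ig: "i \<le> ff g / p" .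
      have "hh y / hh g = (ff y / p) / (ff g / p)"
        unfolding ff_def using p ZZ_pos hh_pos[of g] by (simp add: field_simps)
      also have "\<dots> \<le> Fl y / i" unfolding Fly
        using ig True ff_pos[of y] ff_pos[of g] p by (intro divide_left_mono) auto
      finally have "ln (hh y / hh g) \<le> ln (Fl y / i)"
        using hh_pos[of y] hh_pos[of g] by (intro ln_mono) auto
      moreover have "1 / ww y \<le> ln (hh y / hh g)" using ratio[OF g(1) y] g(4) ky by simp
      ultimately have "ennreal (1 / ww y) \<le> Dfun Fl C y" using D True by (simp add: ennreal_leI)
      then show ?thesis by (simp add: add_increasing2)
    qed
  next
    case False
    have N0: "0 < real (NN k)" using NN_pos[of k] by simp
    have "real (NN k) < 1 / r" using False r N0 by (simp add: field_simps)
    then have "ln (real (NN k)) \<le> ln (1 / r)" using N0 by (intro ln_mono) auto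
    moreover have "3 * exp ((real k + 1)\<^sup>2) \<le> ln (real (NN k))"
    proof -
      have "ln (exp (3 * exp ((real k + 1)\<^sup>2))) \<le> ln (real (NN k))"
        using NN_ge[of k] by (intro ln_mono) auto
      then show ?thesis by simp
    qed
    moreover have "exp (y\<^sup>2) \<le> exp ((real k + 1)\<^sup>2)"
    proof -
      have "y * y \<le> (real k + 1) * (real k + 1)" using ky y1 by (intro mult_mono) auto
      then show ?thesis by (simp add: power2_eq_square)
    qed
    moreover have "ln (1 / r) \<le> log_plus (1 / r)" unfolding log_plus_def using r by simp
    ultimately have "1 / ww y \<le> log_plus (1 / r)" using inv_ww_le[of y] by linarith
    then have "ennreal (1 / ww y) \<le> ennreal (log_plus (1 / r))" by (rule ennreal_leI)
    then show ?thesis by (simp add: add_increasing)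
  qed
qed

lemma MMinf_borel[measurable]: "(\<lambda>y. MM y * infdist y GG) \<in> borel_measurable borel"
  by (rule borel_measurable_continuous_onI) (unfold MM_def, intro continuous_intros)

lemma Gd_borel[measurable]: "Gd \<in> sets borel"
  unfolding Gd_def by measurable

definition bad :: "nat \<Rightarrow> real set" where
  "bad k = {y. real k \<le> y \<and> y \<le> real k + 1 \<and> MM y * infdist y GG < 1}"

lemma bad_borel[measurable]: "bad k \<in> sets borel"
  unfolding bad_def by measurable

lemma GG_nonempty: "GG \<noteq> {}"
  using in_GG[of 1 0] by auto

lemma bad_sub:
  assumes k1: "1 \<le> k"
  shows "bad k \<subseteq> (\<Union>i\<in>{..NN k}. ball (real k + real i / real (NN k)) (1 / (4 * (real (NN k) + 1))))"
proof
  fix y assume y: "y \<in> bad k"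
  define N where "N = NN k"
  define \<eta> where "\<eta> = 1 / (4 * (real N + 1))"
  have Npos: "0 < real N" unfolding N_def using NN_pos[of k] by simp
  have yk: "real k \<le> y" "y \<le> real k + 1" and yb: "MM y * infdist y GG < 1"
    using y unfolding bad_def by auto
  have "(real k + 1)\<^sup>2 \<le> (y + 1)\<^sup>2" using yk by (intro power_mono) auto
  then have "exp (3 * exp ((real k + 1)\<^sup>2)) \<le> exp (3 * exp ((y + 1)\<^sup>2))" by simp
  then have "4 * real N + 4 \<le> MM y" unfolding MM_def N_def using NN_le[of k] by linarith
  then have MMge: "4 * (real N + 1) \<le> MM y" by (simp add: algebra_simps)
  have MMpos: "0 < 4 * (real N + 1)" using Npos by simp
  have "infdist y GG < 1 / MM y" using yb MMge MMpos by (simp add: field_simps)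
  also have "\<dots> \<le> \<eta>" unfolding \<eta>_def using MMge MMpos by (intro divide_left_mono) auto
  finally have "(INF a\<in>GG. dist y a) < \<eta>" by (simp add: infdist_notempty[OF GG_nonempty])
  then obtain g where g: "g \<in> GG" "dist y g < \<eta>" using cInf_lessD[of "(\<lambda>a. dist y a) ` GG"] GG_nonempty by auto
  have "\<exists>i\<le>N. dist y (real k + real i / real N) < \<eta>"
  proof (cases "g \<le> real k")
    case True
    then have "dist y (real k + real 0 / real N) < \<eta>" using g yk by (simp add: dist_real_def)
    then show ?thesis by blast
  next
    case False
    show ?thesis
    proof (cases "real k + 1 \<le> g")
      case True
      then have "dist y (real k + real N / real N) < \<eta>" using g yk Npos by (simp add: dist_real_def)
      then show ?thesis by blast
    next
      case False2: False
      obtain k' i' where g': "g = real k' + real i' / real (NN k')" "1 \<le> k'" "i' \<le> NN k'"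
        using g(1) unfolding GG_def by blast
      have N'pos: "0 < real (NN k')" using NN_pos[of k'] by simp
      have "real i' / real (NN k') \<le> 1" using g'(3) N'pos by simp
      moreover have "0 \<le> real i' / real (NN k')" by simp
      ultimately have "real k' \<le> g" "g \<le> real k' + 1" using g'(1) by linarith+
      then have "real k' < real k + 1" "real k < real k' + 1" using False False2 by linarith+
      then have "k' = k" by linarith
      then show ?thesis using g g' unfolding N_def by blast
    qed
  qed
  then show "y \<in> (\<Union>i\<in>{..NN k}. ball (real k + real i / real (NN k)) (1 / (4 * (real (NN k) + 1))))"
    unfolding N_def \<eta>_def by (auto simp: dist_commute)
qed

lemma bad_measure: "1 \<le> k \<Longrightarrow> emeasure lborel (bad k) \<le> ennreal (1 / 2)"
proof -
  assume k1: "1 \<le> k"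
  define N where "N = NN k"
  define \<eta> where "\<eta> = 1 / (4 * (real N + 1))"
  have eta: "0 < \<eta>" unfolding \<eta>_def by simp
  have "emeasure lborel (bad k) \<le> emeasure lborel (\<Union>i\<in>{..N}. ball (real k + real i / real N) \<eta>)"
    using bad_sub[OF k1] unfolding N_def \<eta>_def by (intro emeasure_mono) auto
  also have "\<dots> \<le> (\<Sum>i\<in>{..N}. emeasure lborel (ball (real k + real i / real N) \<eta>))"
    by (intro emeasure_subadditive_finite) auto
  also have "\<dots> = (\<Sum>i\<in>{..N}. ennreal (2 * \<eta>))"
    using eta by (intro sum.cong) (auto simp: ball_eq_greaterThanLessThan)
  also have "\<dots> = ennreal (real (N + 1) * (2 * \<eta>))"
    using eta by (simp add: ennreal_mult ennreal_of_nat_eq_real_of_nat)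
  also have "real (N + 1) * (2 * \<eta>) = 1 / 2" unfolding \<eta>_def by (simp add: field_simps)
  finally show ?thesis by simp
qed

lemma Gd_infinite: "emeasure lborel Gd = \<infinity>"
proof (rule ccontr)
  assume ninf: "emeasure lborel Gd \<noteq> \<infinity>"
  obtain c where c: "emeasure lborel Gd = ennreal c" "0 \<le> c"
    using ninf by (cases "emeasure lborel Gd" rule: ennreal_cases) auto
  define n where "n = nat \<lceil>2 * c\<rceil> + 1"
  have "0 \<le> \<lceil>2 * c\<rceil>" using c by simp
  then have "real (nat \<lceil>2 * c\<rceil>) = of_int \<lceil>2 * c\<rceil>" by simp
  then have "real n = of_int \<lceil>2 * c\<rceil> + 1" unfolding n_def by simp
  then have nbig: "c < real n / 2" using le_of_int_ceiling[of "2 * c"] by linarith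
  have sub: "{1..real n + 1} \<subseteq> Gd \<union> (\<Union>k\<in>{1..n}. bad k)"
  proof
    fix y :: real assume y: "y \<in> {1..real n + 1}"
    show "y \<in> Gd \<union> (\<Union>k\<in>{1..n}. bad k)"
    proof (cases "y \<in> Gd")
      case True then show ?thesis by simp
    next
      case False
      then have yb: "MM y * infdist y GG < 1" using y unfolding Gd_def by auto
      define k where "k = min n (nat \<lfloor>y\<rfloor>)"
      have fl: "real (nat \<lfloor>y\<rfloor>) = of_int \<lfloor>y\<rfloor>" using y by simp
      have f1: "1 \<le> nat \<lfloor>y\<rfloor>" using y by (intro le_nat_floor) simp
      have n1: "1 \<le> n" unfolding n_def by simp
      have k1: "1 \<le> k" "k \<le> n" unfolding k_def
        by (rule min.boundedI[OF n1 f1]) (rule min.cobounded1)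
      have fc: "of_int \<lfloor>y\<rfloor> \<le> y" "y < of_int \<lfloor>y\<rfloor> + 1" using floor_correct[of y] by simp_all
      have kk: "real k \<le> y \<and> y \<le> real k + 1"
      proof (cases "nat \<lfloor>y\<rfloor> \<le> n")
        case True
        have "k = nat \<lfloor>y\<rfloor>" unfolding k_def by (rule min_absorb2[OF True])
        then have "real k = of_int \<lfloor>y\<rfloor>" using fl by (simp only:)
        then show ?thesis using fc by linarith
      next
        case False
        then have nl: "n < nat \<lfloor>y\<rfloor>" by (simp only: not_le)
        have kn: "k = n" unfolding k_def by (rule min_absorb1[OF less_imp_le[OF nl]])
        have "real n < real (nat \<lfloor>y\<rfloor>)" using nl by (simp only: of_nat_less_iff)
        then have "real n < of_int \<lfloor>y\<rfloor>" unfolding fl .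
        then have "real n \<le> y" using fc(1) by linarith
        then show ?thesis using y unfolding kn by auto
      qed
      have "y \<in> bad k" unfolding bad_def mem_Collect_eq using yb kk by blast
      moreover have "k \<in> {1..n}" using k1 by simp
      ultimately show ?thesis by (intro UnI2) (rule UN_I)
    qed
  qed
  have mU: "(\<Union>k\<in>{1..n}. bad k) \<in> sets lborel" by (intro sets.finite_UN) auto
  have mG: "Gd \<in> sets lborel" by simp
  have b1: "emeasure lborel (\<Union>k\<in>{1..n}. bad k) \<le> (\<Sum>k\<in>{1..n}. emeasure lborel (bad k))"
    by (rule emeasure_subadditive_finite) auto
  have b2: "(\<Sum>k\<in>{1..n}. emeasure lborel (bad k)) \<le> (\<Sum>k\<in>{1..n}. ennreal (1 / 2))"
    by (rule sum_mono, rule bad_measure) simp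
  have b3: "(\<Sum>k\<in>{1..n}. ennreal (1 / 2)) = ennreal (real n / 2)"
  proof -
    have "(\<Sum>k\<in>{1..n}. ennreal (1 / 2)) = of_nat (card {1..n}) * ennreal (1 / 2)"
      by (rule sum_constant)
    also have "card {1..n} = n" by simp
    also have "(of_nat n :: ennreal) = ennreal (real n)" by (rule ennreal_of_nat_eq_real_of_nat)
    also have "ennreal (real n) * ennreal (1 / 2) = ennreal (real n * (1 / 2))"
      by (rule ennreal_mult[symmetric]) auto
    finally show ?thesis by simp
  qed
  have bU: "emeasure lborel (\<Union>k\<in>{1..n}. bad k) \<le> ennreal (real n / 2)"
    using b1 b2 b3 by (metis order_trans)
  have "ennreal (real n) = emeasure lborel {1..real n + 1}" by simp
  also have "\<dots> \<le> emeasure lborel (Gd \<union> (\<Union>k\<in>{1..n}. bad k))"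
    by (rule emeasure_mono[OF sub]) (use mU mG in blast)
  also have "\<dots> \<le> emeasure lborel Gd + emeasure lborel (\<Union>k\<in>{1..n}. bad k)"
    by (rule emeasure_subadditive[OF mG mU])
  also have "\<dots> \<le> ennreal c + ennreal (real n / 2)"
    unfolding c(1) by (rule add_left_mono[OF bU])
  also have "\<dots> = ennreal (c + real n / 2)" using c by (simp add: ennreal_plus)
  finally have "ennreal (real n) \<le> ennreal (c + real n / 2)" .
  then have "real n \<le> c + real n / 2" using c by (subst (asm) ennreal_le_iff) auto
  then show False using nbig by linarith
qed

lemma ff_leb[measurable]: "ff \<in> borel_measurable lebesgue"
  by (rule measurable_completion) simp

lemma ww_leb[measurable]: "ww \<in> borel_measurable lebesgue"
  by (rule measurable_completion) simp

lemma Gd_leb[measurable]: "Gd \<in> sets lebesgue"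
  by (rule sets_completionI_sets) simp

lemma supp_ff: "supp ff = UNIV"
  unfolding supp_def using ff_pos by auto

lemma ff_Phi_ge: "y \<in> Gd \<Longrightarrow> ennreal (1 / ZZ) \<le> ennreal (ff y) * ennreal (1 / ww y)"
proof -
  assume y: "y \<in> Gd"
  have "1 / ZZ \<le> ff y * (1 / ww y)"
    unfolding ff_def using hh_Gd[OF y] ww_pos[of y] ZZ_pos by (simp add: field_simps)
  then have "ennreal (1 / ZZ) \<le> ennreal (ff y * (1 / ww y))" by (rule ennreal_leI)
  also have "\<dots> = ennreal (ff y) * ennreal (1 / ww y)"
    using ff_pos[of y] ww_pos[of y] by (intro ennreal_mult) auto
  finally show ?thesis .
qed

lemma int_Phi_inf: "(\<integral>\<^sup>+ y. ennreal (ff y) * (indicator Gd y * ennreal (1 / ww y)) \<partial>lebesgue) = \<infinity>"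
proof -
  have "(\<integral>\<^sup>+ y. ennreal (1 / ZZ) * indicator Gd y \<partial>lebesgue) \<le>
        (\<integral>\<^sup>+ y. ennreal (ff y) * (indicator Gd y * ennreal (1 / ww y)) \<partial>lebesgue)"
    by (rule nn_integral_mono) (auto simp: ff_Phi_ge split: split_indicator)
  moreover have "(\<integral>\<^sup>+ y. ennreal (1 / ZZ) * indicator Gd y \<partial>lebesgue) = \<infinity>"
  proof -
    have "(\<integral>\<^sup>+ y. ennreal (1 / ZZ) * indicator Gd y \<partial>lebesgue) = (\<integral>\<^sup>+ y. ennreal (1 / ZZ) * indicator Gd y \<partial>lborel)"
      by (rule nn_integral_completion)
    also have "\<dots> = ennreal (1 / ZZ) * emeasure lborel Gd"
      by (rule nn_integral_cmult_indicator) simp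
    also have "\<dots> = \<infinity>" using Gd_infinite ZZ_pos by (simp add: ennreal_mult_top)
    finally show ?thesis .
  qed
  ultimately show ?thesis by (simp add: top_unique)
qed

lemma not_CSSA: "ff \<notin> F_CSSA"
proof
  assume "ff \<in> F_CSSA"
  then obtain Y r C A h where H:
    "let p = (\<lambda>l. measure (law ff) (Y l));
         fl = (\<lambda>l x. indicator (Y l) x * ff x / p l)
       in (\<forall>l. Y l \<in> sets lebesgue) \<and> disjoint_family Y \<and> (\<Union>l. Y l) = supp ff \<and>
          (\<forall>l. 0 < p l \<longrightarrow> fssa_with (fl l) (r l) (C l) (A l) (h l)) \<and>
          (\<Sum>l. if 0 < p l then ennreal (p l) *
                (\<integral>\<^sup>+ y. indicator (Y l) y * Dfun (fl l) (C l) y \<partial>law (fl l)) else 0) < \<infinity> \<and>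
          (\<Sum>l. if 0 < p l then ennreal (p l * log_plus (1 / r l)) else 0) < \<infinity>"
    unfolding F_CSSA_def by blast
  define p where "p = (\<lambda>l. measure (law ff) (Y l))"
  define fl where "fl = (\<lambda>l x. indicator (Y l) x * ff x / p l)"
  define a where "a = (\<lambda>l. if 0 < p l then ennreal (p l) *
                (\<integral>\<^sup>+ y. indicator (Y l) y * Dfun (fl l) (C l) y \<partial>law (fl l)) else 0)"
  define b where "b = (\<lambda>l. if 0 < p l then ennreal (p l * log_plus (1 / r l)) else 0)"
  have H2: "(\<forall>l. Y l \<in> sets lebesgue) \<and> disjoint_family Y \<and> (\<Union>l. Y l) = supp ff \<and>
          (\<forall>l. 0 < p l \<longrightarrow> fssa_with (fl l) (r l) (C l) (A l) (h l)) \<and>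
          suminf a < \<infinity> \<and> suminf b < \<infinity>"
    using H unfolding Let_def p_def fl_def a_def b_def .
  have Ys[measurable]: "\<And>l. Y l \<in> sets lebesgue" using H2 by blast
  have disj: "disjoint_family Y" using H2 by blast
  have Yun: "(\<Union>l. Y l) = UNIV" using H2 supp_ff by simp
  have fs: "\<And>l. 0 < p l \<Longrightarrow> fssa_with (fl l) (r l) (C l) (A l) (h l)" using H2 by blast
  have Sa: "suminf a < \<infinity>" and Sb: "suminf b < \<infinity>" using H2 by blast+
  define Phi where "Phi = (\<lambda>y. indicator Gd y * ennreal (1 / ww y))"
  have Phi_m[measurable]: "Phi \<in> borel_measurable lebesgue" unfolding Phi_def by measurable
  define J where "J = (\<lambda>l. \<integral>\<^sup>+ y. (ennreal (ff y) * Phi y) * indicator (Y l) y \<partial>lebesgue)"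
  have lawff: "law ff = density lebesgue (\<lambda>x. ennreal (ff x))" unfolding law_def ..
  have pe: "ennreal (p l) = (\<integral>\<^sup>+ x. ennreal (ff x) * indicator (Y l) x \<partial>lebesgue)" for l
  proof -
    have em: "emeasure (law ff) (Y l) = (\<integral>\<^sup>+ x. ennreal (ff x) * indicator (Y l) x \<partial>lebesgue)"
      unfolding lawff by (rule emeasure_density) auto
    have "(\<integral>\<^sup>+ x. ennreal (ff x) * indicator (Y l) x \<partial>lebesgue) \<le> (\<integral>\<^sup>+ x. ennreal (ff x) \<partial>lebesgue)"
      by (rule nn_integral_mono) (simp split: split_indicator)
    also have "\<dots> = 1" by (simp add: nn_integral_completion nn_ff)
    finally have "emeasure (law ff) (Y l) \<noteq> \<infinity>" using em by (auto simp: top_unique)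
    then have "emeasure (law ff) (Y l) = ennreal (p l)"
      using emeasure_eq_ennreal_measure[of "law ff" "Y l"] unfolding p_def by simp
    then show ?thesis using em by simp
  qed
  have p0: "0 \<le> p l" for l unfolding p_def by simp
  have Jle: "J l \<le> a l + b l" for l
  proof (cases "0 < p l")
    case False
    then have "p l = 0" using p0[of l] by simp
    then have "(\<integral>\<^sup>+ x. ennreal (ff x) * indicator (Y l) x \<partial>lebesgue) = 0" using pe[of l] by simp
    then have "AE x in lebesgue. ennreal (ff x) * indicator (Y l) x = 0"
      by (subst (asm) nn_integral_0_iff_AE) auto
    then have AE0: "AE x in lebesgue. (ennreal (ff x) * Phi x) * indicator (Y l) x = 0"
      by eventually_elim (auto split: split_indicator)
    note cc = nn_integral_cong_AE[OF AE0]
    then have "J l = 0" unfolding J_def by simp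
    then show ?thesis by simp
  next
    case True
    note F = fs[OF True]
    have pl: "0 < p l" by fact
    have dens: "is_density (fl l)" using F unfolding fssa_with_def by blast
    then have flm[measurable]: "fl l \<in> borel_measurable lebesgue" unfolding is_density_def by blast
    have fl_pos: "fl l x > 0 \<longleftrightarrow> x \<in> Y l" for x
      unfolding fl_def using pl ff_pos[of x] by (auto split: split_indicator)
    have supp_fl: "supp (fl l) = Y l" unfolding supp_def using fl_pos by auto
    have Dm: "(\<lambda>y. if y \<in> supp (fl l) then Dfun (fl l) (C l) y else 0) \<in> borel_measurable lebesgue"
      using F unfolding fssa_with_def by blast
    define g where "g = (\<lambda>y. indicator (Y l) y * Dfun (fl l) (C l) y)"
    have g_eq: "g = (\<lambda>y. if y \<in> supp (fl l) then Dfun (fl l) (C l) y else 0)"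
      unfolding g_def supp_fl by (auto split: split_indicator)
    have gm[measurable]: "g \<in> borel_measurable lebesgue" unfolding g_eq by (rule Dm)
    have rpos: "0 < r l" using F unfolding fssa_with_def by blast
    have cube: "\<And>y. y \<in> Y l \<Longrightarrow> closed_cube (r l) (C l y) \<and> y \<in> C l y"
      using F unfolding fssa_with_def supp_fl by blast
    define lp where "lp = log_plus (1 / r l)"
    have lp0: "0 \<le> lp" unfolding lp_def by (rule log_plus_nonneg)
    have a_eq: "a l = (\<integral>\<^sup>+ y. ennreal (ff y) * g y \<partial>lebesgue)"
    proof -
      have "a l = ennreal (p l) * (\<integral>\<^sup>+ y. g y \<partial>law (fl l))"
        unfolding a_def g_def using pl by simp
      also have "(\<integral>\<^sup>+ y. g y \<partial>law (fl l)) = (\<integral>\<^sup>+ y. ennreal (fl l y) * g y \<partial>lebesgue)"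
        unfolding law_def by (rule nn_integral_density) auto
      also have "ennreal (p l) * \<dots> = (\<integral>\<^sup>+ y. ennreal (p l) * (ennreal (fl l y) * g y) \<partial>lebesgue)"
        by (rule nn_integral_cmult[symmetric]) auto
      also have "\<dots> = (\<integral>\<^sup>+ y. ennreal (ff y) * g y \<partial>lebesgue)"
      proof (rule nn_integral_cong)
        fix y
        show "ennreal (p l) * (ennreal (fl l y) * g y) = ennreal (ff y) * g y"
        proof (cases "y \<in> Y l")
          case True
          have "ennreal (p l) * ennreal (fl l y) = ennreal (p l * fl l y)"
            using pl fl_pos[of y] True by (intro ennreal_mult[symmetric]) auto
          also have "p l * fl l y = ff y" unfolding fl_def using True pl by simp
          finally show ?thesis by (simp add: mult.assoc[symmetric])
        next
          case False
          then show ?thesis unfolding g_def by simp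
        qed
      qed
      finally show ?thesis .
    qed
    have b_eq: "b l = (\<integral>\<^sup>+ y. ennreal (ff y) * indicator (Y l) y * ennreal lp \<partial>lebesgue)"
    proof -
      have "b l = ennreal (p l) * ennreal lp"
        unfolding b_def lp_def[symmetric] using pl lp0 by (simp add: ennreal_mult)
      also have "\<dots> = (\<integral>\<^sup>+ y. ennreal (ff y) * indicator (Y l) y * ennreal lp \<partial>lebesgue)"
        unfolding pe by (rule nn_integral_multc[symmetric]) auto
      finally show ?thesis .
    qed
    have "a l + b l = (\<integral>\<^sup>+ y. ennreal (ff y) * g y + ennreal (ff y) * indicator (Y l) y * ennreal lp \<partial>lebesgue)"
      unfolding a_eq b_eq by (rule nn_integral_add[symmetric]) auto
    also have "\<dots> \<ge> J l" unfolding J_def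
    proof (rule nn_integral_mono)
      fix y
      show "ennreal (ff y) * Phi y * indicator (Y l) y \<le> ennreal (ff y) * g y + ennreal (ff y) * indicator (Y l) y * ennreal lp"
      proof (cases "y \<in> Y l \<and> y \<in> Gd")
        case False
        then show ?thesis unfolding Phi_def by (auto split: split_indicator)
      next
        case True
        then have yY: "y \<in> Y l" and yG: "y \<in> Gd" by auto
        obtain a0 where Ca: "C l y = {a0..a0 + r l}" and yC: "y \<in> C l y"
          using cube[OF yY] unfolding closed_cube_def by blast
        have k: "ennreal (1 / ww y) \<le> Dfun (fl l) (C l) y + ennreal lp"
          unfolding lp_def
        proof (rule key[where C="C l" and Fl="fl l" and y=y and r="r l" and a=a0 and p="p l", OF yG rpos Ca])
          show "a0 \<le> y" "y \<le> a0 + r l" using yC Ca by auto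
          show "0 < p l" by (rule pl)
          show "fl l y = ff y / p l" unfolding fl_def using yY by simp
          show "0 \<le> fl l z" for z unfolding fl_def using ff_pos[of z] pl
            by (auto split: split_indicator)
          show "fl l z \<le> ff z / p l" for z unfolding fl_def using ff_pos[of z] pl
            by (auto split: split_indicator simp: divide_right_mono)
        qed
        have "ennreal (ff y) * Phi y * indicator (Y l) y = ennreal (ff y) * ennreal (1 / ww y)"
          unfolding Phi_def using yY yG by simp
        also have "\<dots> \<le> ennreal (ff y) * (Dfun (fl l) (C l) y + ennreal lp)"
          by (rule mult_left_mono[OF k]) simp
        also have "\<dots> = ennreal (ff y) * g y + ennreal (ff y) * indicator (Y l) y * ennreal lp"
          unfolding g_def using yY by (simp add: distrib_left)
        finally show ?thesis .
      qed
    qed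
    finally show ?thesis .
  qed
  have "(\<Sum>l. J l) = (\<integral>\<^sup>+ y. (\<Sum>l. (ennreal (ff y) * Phi y) * indicator (Y l) y) \<partial>lebesgue)"
    unfolding J_def by (rule nn_integral_suminf[symmetric]) auto
  also have "\<dots> = (\<integral>\<^sup>+ y. ennreal (ff y) * Phi y \<partial>lebesgue)"
  proof (rule nn_integral_cong)
    fix y
    have "(\<Sum>l. (ennreal (ff y) * Phi y) * indicator (Y l) y) = (ennreal (ff y) * Phi y) * (\<Sum>l. indicator (Y l) y)"
      by (rule ennreal_suminf_cmult)
    also have "(\<Sum>l. indicator (Y l) y :: ennreal) = indicator (\<Union>l. Y l) y"
      by (rule suminf_indicator[OF disj])
    finally show "(\<Sum>l. (ennreal (ff y) * Phi y) * indicator (Y l) y) = ennreal (ff y) * Phi y"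
      using Yun by simp
  qed
  also have "\<dots> = \<infinity>" unfolding Phi_def by (rule int_Phi_inf)
  finally have SJ: "(\<Sum>l. J l) = \<infinity>" .
  have "(\<Sum>l. J l) \<le> (\<Sum>l. a l + b l)"
    by (rule suminf_le) (use Jle in \<open>auto intro: summableI\<close>)
  also have "\<dots> = suminf a + suminf b"
    by (rule suminf_add[symmetric]) (auto intro: summableI)
  also have "\<dots> < \<infinity>" using Sa Sb by (simp add: ennreal_add_less_top)
  finally show False using SJ by simp
qed


theorem mainTheorem16:
  shows "\<exists>f :: real \<Rightarrow> real. f \<in> F_Ent
           \<and> (\<integral>\<^sup>+ x. ennreal (x\<^sup>2 * f x) \<partial>lborel) < \<infinity>
           \<and> f \<notin> F_CSSA"
  using ff_in_Ent ff_moment not_CSSA by blast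

end
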